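(* Let $G$ be the non-abelian group of order $27$ and exponent $3$, and let $U_1$, $U_2$ be short $3$-sequences over $G$, neither of central type. Then: (a) if the terms of $U_1\cdot U_2$ lie in four distinct non-central $z$-classes, then $U_1\cdot U_2$ is an EGZ sequence; (b) if the terms of $U_1\cdot U_2$ lie in at least two distinct non-central $z$-classes and at least one of $U_1,U_2$ is of thick type, then $U_1\cdot U_2$ is an EGZ sequence; (c) moreover, if $g_1,g_2,g_3,g_4\in G\setminus Z(G)$ and $u\in Z(G)$ are such that $g_1$ and $g_3$ lie in distinct $z$-classes and $g_1g_2,\ g_3g_4\in Z(G)$, then there is a permutation $\sigma$ of $\{1,2,3,4\}$ with $g_{\sigma(1)}g_{\sigma(2)}g_{\sigma(3)}g_{\sigma(4)}u=1$.
   Context: $G$ is the Heisenberg group of order $27$ and exponent $3$; $Z(G)=[G,G]$ has order $3$. For $g\in G\setminus Z(G)$ its $z$-class is $\mathcal{K}[g]=\{g^\lambda u: \lambda\in\{1,2\},\ u\in Z(G)\}=C_G(g)\setminus Z(G)$; there are four non-central $z$-classes. Sequences are finite unordered multisets of elements; $U_1\cdot U_2$ denotes concatenation. A sequence $g_1\cdot\dotsc\cdot g_\ell$ has central product if $g_1\cdots g_\ell\in Z(G)$ (independent of ordering). A short $3$-sequence is a sequence $x_1\cdot x_2\cdot x_3$ with $x_1x_2x_3\in Z(G)$; it is of central type if all $x_i\in Z(G)$; thin type if exactly two terms are non-central; thick type A if all three terms are non-central and pairwise conjugate; thick type B if all three are non-central and it is not thick type A; thick type means thick type A or B. An EGZ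 sequence is a sequence $T$ with central product containing three terms which can be labelled $h_1,h_2,h_3$ so that $h_3$ commutes with none of $h_1$, $h_2$, $h_1h_2$. *)

theory Defs
  imports "HOL-Algebra.Group" "HOL-Library.Multiset" "HOL-Combinatorics.Permutations"
begin

definition center :: "('a, 'b) monoid_scheme \<Rightarrow> 'a set" where
  "center G = {z \<in> carrier G. \<forall>x \<in> carrier G. z \<otimes>\<^bsub>G\<^esub> x = x \<otimes>\<^bsub>G\<^esub> z}"

definition commute :: "('a, 'b) monoid_scheme \<Rightarrow> 'a \<Rightarrow> 'a \<Rightarrow> bool" where
  "commute G x y \<longleftrightarrow> x \<otimes>\<^bsub>G\<^esub> y = y \<otimes>\<^bsub>G\<^esub> x"

definition conjugate :: "('a, 'b) monoid_scheme \<Rightarrow> 'a \<Rightarrow> 'a \<Rightarrow> bool" where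
  "conjugate G x y \<longleftrightarrow> (\<exists>h \<in> carrier G. y = h \<otimes>\<^bsub>G\<^esub> x \<otimes>\<^bsub>G\<^esub> inv\<^bsub>G\<^esub> h)"

definition zclass :: "('a, 'b) monoid_scheme \<Rightarrow> 'a \<Rightarrow> 'a set" where
  "zclass G g = {g [^]\<^bsub>G\<^esub> (l::nat) \<otimes>\<^bsub>G\<^esub> u | l u. l \<in> {1, 2} \<and> u \<in> center G}"

definition list_prod :: "('a, 'b) monoid_scheme \<Rightarrow> 'a list \<Rightarrow> 'a" where
  "list_prod G xs = foldr (\<lambda>x y. x \<otimes>\<^bsub>G\<^esub> y) xs \<one>\<^bsub>G\<^esub>"

definition is_seq :: "('a, 'b) monoid_scheme \<Rightarrow> 'a multiset \<Rightarrow> bool" where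
  "is_seq G T \<longleftrightarrow> set_mset T \<subseteq> carrier G"

definition central_product :: "('a, 'b) monoid_scheme \<Rightarrow> 'a multiset \<Rightarrow> bool" where
  "central_product G T \<longleftrightarrow> (\<forall>xs. mset xs = T \<longrightarrow> list_prod G xs \<in> center G)"

definition short3 :: "('a, 'b) monoid_scheme \<Rightarrow> 'a multiset \<Rightarrow> bool" where
  "short3 G U \<longleftrightarrow> is_seq G U \<and>
     (\<exists>x1 x2 x3. U = {#x1, x2, x3#} \<and> x1 \<otimes>\<^bsub>G\<^esub> x2 \<otimes>\<^bsub>G\<^esub> x3 \<in> center G)"

definition central_type :: "('a, 'b) monoid_scheme \<Rightarrow> 'a multiset \<Rightarrow> bool" where
  "central_type G U \<longleftrightarrow> short3 G U \<and> set_mset U \<subseteq> center G"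

definition thin_type :: "('a, 'b) monoid_scheme \<Rightarrow> 'a multiset \<Rightarrow> bool" where
  "thin_type G U \<longleftrightarrow> short3 G U \<and> size (filter_mset (\<lambda>x. x \<notin> center G) U) = 2"

definition thick_A :: "('a, 'b) monoid_scheme \<Rightarrow> 'a multiset \<Rightarrow> bool" where
  "thick_A G U \<longleftrightarrow> short3 G U \<and> (\<forall>x \<in># U. x \<notin> center G) \<and>
     (\<forall>x \<in># U. \<forall>y \<in># U. conjugate G x y)"

definition thick_B :: "('a, 'b) monoid_scheme \<Rightarrow> 'a multiset \<Rightarrow> bool" where
  "thick_B G U \<longleftrightarrow> short3 G U \<and> (\<forall>x \<in># U. x \<notin> center G) \<and> \<not> thick_A G U"

definition thick_type :: "('a, 'b) monoid_scheme \<Rightarrow> 'a multiset \<Rightarrow> bool" where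
  "thick_type G U \<longleftrightarrow> thick_A G U \<or> thick_B G U"

definition EGZ :: "('a, 'b) monoid_scheme \<Rightarrow> 'a multiset \<Rightarrow> bool" where
  "EGZ G T \<longleftrightarrow> is_seq G T \<and> central_product G T \<and>
     (\<exists>h1 h2 h3. {#h1, h2, h3#} \<subseteq># T \<and>
        \<not> commute G h3 h1 \<and> \<not> commute G h3 h2 \<and> \<not> commute G h3 (h1 \<otimes>\<^bsub>G\<^esub> h2))"

definition nc_zclasses :: "('a, 'b) monoid_scheme \<Rightarrow> 'a multiset \<Rightarrow> 'a set set" where
  "nc_zclasses G T = zclass G ` {x \<in> set_mset T. x \<notin> center G}"

end

theory Submission
  imports Defs
begin


lemma m3: "((s::nat) + 2*P) mod 3 = (s mod 3 + 2*(P mod 3)) mod 3"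
proof -
  have "(s + 2*P) mod 3 = (s mod 3 + (2*P) mod 3) mod 3" by (rule mod_add_eq[symmetric])
  also have "(2*P) mod 3 = (2*(P mod 3)) mod 3" by (rule mod_mult_right_eq[symmetric])
  also have "(s mod 3 + (2*(P mod 3)) mod 3) mod 3 = (s mod 3 + 2*(P mod 3)) mod 3" by (rule mod_add_right_eq)
  finally show ?thesis .
qed
lemma l3: "x < (3::nat) \<Longrightarrow> x = 0 \<or> x = 1 \<or> x = 2" by arith

definition pr :: "nat \<Rightarrow> nat \<Rightarrow> nat \<Rightarrow> nat \<Rightarrow> bool" where
  "pr x1 y1 x2 y2 \<longleftrightarrow> (x2*y1) mod 3 = (x1*y2) mod 3"

definition opt :: "nat \<Rightarrow> nat \<Rightarrow> nat \<Rightarrow> nat \<Rightarrow> nat \<Rightarrow> nat \<Rightarrow> bool" where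
  "opt p1 q1 p2 q2 p3 q3 \<longleftrightarrow> \<not> pr p3 q3 p1 q1 \<and> \<not> pr p3 q3 p2 q2 \<and> \<not> pr p3 q3 ((p1+p2) mod 3) ((q1+q2) mod 3)"


lemma vb: assumes "a1<3" "b1<3" "a2<3" "b2<3" "c<3" "d<3"
  "\<not>(a1=0\<and>b1=0)" "\<not>(a2=0\<and>b2=0)" "\<not>(c=0\<and>d=0)" "\<not> pr a1 b1 a2 b2"
  and a3: "a3 = (6-a1-a2) mod 3" and b3: "b3 = (6-b1-b2) mod 3"
  shows "opt a1 b1 a2 b2 c d \<or> opt a1 b1 c d a2 b2 \<or> opt a2 b2 c d a3 b3 \<or> opt a3 b3 c d a1 b1
    \<or> opt c d a2 b2 a3 b3 \<or> opt c d a3 b3 a1 b1 \<or> opt c d a1 b1 a2 b2"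
  using assms(7-10) l3[OF assms(1)] l3[OF assms(2)] l3[OF assms(3)] l3[OF assms(4)] l3[OF assms(5)] l3[OF assms(6)]
  unfolding a3 b3 opt_def pr_def by (elim disjE; simp)


lemma neg6: fixes a b c :: nat assumes "a<3" "b<3" "c<3" "((a+b) mod 3 + c) mod 3 = 0" shows "c = (6-a-b) mod 3"
  using assms(4) l3[OF assms(1)] l3[OF assms(2)] l3[OF assms(3)] by (elim disjE; simp)

lemma neg3: assumes "x < 3" "y < 3" "((x::nat) + y) mod 3 = 0" shows "y = (3 - x) mod 3"
  using assms(3) l3[OF assms(1)] l3[OF assms(2)] by (elim disjE; simp)

lemma arc0: fixes i1 j1 i3 j3 :: nat assumes "i1<3" "j1<3" "i3<3" "j3<3"
  and "(i3*j1) mod 3 \<noteq> (i1*j3) mod 3"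
  shows "(((3-i1) mod 3)*j1 + i3*(j1+(3-j1) mod 3) + ((3-i3) mod 3)*(j1+(3-j1) mod 3+j3)) mod 3 \<noteq>
         (i3*j1 + ((3-i1) mod 3)*(j1+j3) + ((3-i3) mod 3)*(j1+j3+(3-j1) mod 3)) mod 3
    \<and> (((3-i1) mod 3)*j1 + i3*(j1+(3-j1) mod 3) + ((3-i3) mod 3)*(j1+(3-j1) mod 3+j3)) mod 3 \<noteq>
         (((3-i1) mod 3)*((3-j3) mod 3) + i3*((3-j3) mod 3+(3-j1) mod 3) + i1*((3-j3) mod 3+(3-j1) mod 3+j3)) mod 3
    \<and> (i3*j1 + ((3-i1) mod 3)*(j1+j3) + ((3-i3) mod 3)*(j1+j3+(3-j1) mod 3)) mod 3 \<noteq>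
         (((3-i1) mod 3)*((3-j3) mod 3) + i3*((3-j3) mod 3+(3-j1) mod 3) + i1*((3-j3) mod 3+(3-j1) mod 3+j3)) mod 3"
  using assms(5) l3[OF assms(1)] l3[OF assms(2)] l3[OF assms(3)] l3[OF assms(4)]
  by (elim disjE; simp)

lemma cov: fixes x y z r :: nat assumes "x<3" "y<3" "z<3" "r<3" "x\<noteq>y" "x\<noteq>z" "y\<noteq>z"
  shows "(r + 2*x) mod 3 = 0 \<or> (r + 2*y) mod 3 = 0 \<or> (r + 2*z) mod 3 = 0"
  using assms(5-7) l3[OF assms(1)] l3[OF assms(2)] l3[OF assms(3)] l3[OF assms(4)]
  by (elim disjE; simp)

lemma arc: fixes i1 j1 i2 j2 i3 j3 i4 j4 K :: nat assumes "i1<3" "j1<3" "i2<3" "j2<3" "i3<3" "j3<3" "i4<3" "j4<3"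
  and "(i1+i2) mod 3 = 0" "(j1+j2) mod 3 = 0" "(i3+i4) mod 3 = 0" "(j3+j4) mod 3 = 0"
  and "(i3*j1) mod 3 \<noteq> (i1*j3) mod 3"
  shows "(K + 2*(i2*j1 + i3*(j1+j2) + i4*(j1+j2+j3))) mod 3 = 0
    \<or> (K + 2*(i3*j1 + i2*(j1+j3) + i4*(j1+j3+j2))) mod 3 = 0
    \<or> (K + 2*(i2*j4 + i3*(j4+j2) + i1*(j4+j2+j3))) mod 3 = 0"
proof -
  have e: "i2 = (3-i1) mod 3" "j2 = (3-j1) mod 3" "i4 = (3-i3) mod 3" "j4 = (3-j3) mod 3"
    using neg3[OF assms(1) assms(3) assms(9)] neg3[OF assms(2) assms(4) assms(10)]
      neg3[OF assms(5) assms(7) assms(11)] neg3[OF assms(6) assms(8) assms(12)] by simp_all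
  define x where "x = (i2*j1 + i3*(j1+j2) + i4*(j1+j2+j3))"
  define y where "y = (i3*j1 + i2*(j1+j3) + i4*(j1+j3+j2))"
  define z where "z = (i2*j4 + i3*(j4+j2) + i1*(j4+j2+j3))"
  have d: "x mod 3 \<noteq> y mod 3" "x mod 3 \<noteq> z mod 3" "y mod 3 \<noteq> z mod 3"
    using arc0[OF assms(1) assms(2) assms(5) assms(6) assms(13)] unfolding x_def y_def z_def e by simp_all
  have "(K mod 3 + 2*(x mod 3)) mod 3 = 0 \<or> (K mod 3 + 2*(y mod 3)) mod 3 = 0 \<or> (K mod 3 + 2*(z mod 3)) mod 3 = 0"
    by (rule cov) (simp_all add: d)
  thus ?thesis unfolding x_def[symmetric] y_def[symmetric] z_def[symmetric] m3[of K] .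
qed


locale exp3grp = group G for G :: "('a,'b) monoid_scheme" (structure) +
  assumes exp3: "\<forall>x\<in>carrier G. x [^] (3::nat) = \<one>"
begin

lemma cube: "x \<in> carrier G \<Longrightarrow> x \<otimes> x \<otimes> x = \<one>"
  using exp3 by (simp add: numeral_3_eq_3)

lemma sq_inv: "x \<in> carrier G \<Longrightarrow> x \<otimes> x = inv x"
  by (metis cube inv_equality m_closed m_assoc)

lemma F: assumes p: "p \<in> carrier G" and q: "q \<in> carrier G"
  shows "q \<otimes> p \<otimes> q = inv p \<otimes> inv q \<otimes> inv p"
proof -
  have "(p \<otimes> q) \<otimes> (p \<otimes> q) \<otimes> (p \<otimes> q) = \<one>" using cube p q by simp
  hence "p \<otimes> (q \<otimes> p \<otimes> q) \<otimes> (p \<otimes> q) = \<one>" using p q by (simp add: m_assoc)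
  hence "q \<otimes> p \<otimes> q = inv p \<otimes> inv (p \<otimes> q)" using p q
    by (metis inv_equality inv_solve_left m_closed)
  thus ?thesis using p q by (simp add: inv_mult_group m_assoc)
qed

lemma engel: assumes x: "x \<in> carrier G" and y: "y \<in> carrier G"
  shows "x \<otimes> (inv y \<otimes> x \<otimes> y) = (inv y \<otimes> x \<otimes> y) \<otimes> x"
proof -
  have 1: "x \<otimes> inv y \<otimes> x = y \<otimes> inv x \<otimes> y" using F[of "inv y" x] x y by simp
  have 2: "x \<otimes> y \<otimes> x = inv y \<otimes> inv x \<otimes> inv y" using F[of y x] x y by simp
  have 3: "y \<otimes> y = inv y" "inv y \<otimes> inv y = y" using sq_inv y by auto
  have "x \<otimes> (inv y \<otimes> x \<otimes> y) = (x \<otimes> inv y \<otimes> x) \<otimes> y" using x y by (simp add: m_assoc)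
  also have "\<dots> = y \<otimes> inv x \<otimes> (y \<otimes> y)" using 1 x y by (simp add: m_assoc)
  also have "\<dots> = y \<otimes> inv x \<otimes> inv y" using 3 by simp
  also have "\<dots> = (inv y \<otimes> inv y) \<otimes> inv x \<otimes> inv y" using 3 by simp
  also have "\<dots> = inv y \<otimes> (x \<otimes> y \<otimes> x)" using 2 x y by (simp add: m_assoc)
  also have "\<dots> = (inv y \<otimes> x \<otimes> y) \<otimes> x" using x y by (simp add: m_assoc)
  finally show ?thesis .
qed

end

locale H27 = exp3grp G for G :: "('a,'b) monoid_scheme" (structure) +
  fixes a b
  assumes card27: "card (carrier G) = 27"
  and a_in[simp]: "a \<in> carrier G" and b_in[simp]: "b \<in> carrier G"
  and ab_nc: "a \<otimes> b \<noteq> b \<otimes> a"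
begin

definition "c = inv a \<otimes> inv b \<otimes> a \<otimes> b"

lemma c_in[simp]: "c \<in> carrier G" by (simp add: c_def)

lemma canc1[simp]: "x \<in> carrier G \<Longrightarrow> y \<in> carrier G \<Longrightarrow> x \<otimes> (inv x \<otimes> y) = y"
  by (simp add: m_assoc[symmetric])
lemma canc2[simp]: "x \<in> carrier G \<Longrightarrow> y \<in> carrier G \<Longrightarrow> inv x \<otimes> (x \<otimes> y) = y"
  by (simp add: m_assoc[symmetric])

lemma ca: "c \<otimes> a = a \<otimes> c"
proof -
  define t where "t = inv b \<otimes> a \<otimes> b"
  have t: "t \<in> carrier G" by (simp add: t_def)
  have e: "a \<otimes> t = t \<otimes> a" using engel t_def by simp
  have "c = inv a \<otimes> t" by (simp add: c_def t_def m_assoc)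
  hence "c \<otimes> a = t" "a \<otimes> c = t" using e[symmetric] t by (simp_all add: m_assoc)
  thus ?thesis by simp
qed

lemma cb: "c \<otimes> b = b \<otimes> c"
proof -
  define t where "t = inv a \<otimes> inv b \<otimes> a"
  have t: "t \<in> carrier G" by (simp add: t_def)
  have e: "inv b \<otimes> t = t \<otimes> inv b" using engel[of "inv b" a] t_def by simp
  have e2: "t \<otimes> b = b \<otimes> t"
  proof -
    have "b \<otimes> (inv b \<otimes> t) \<otimes> b = b \<otimes> (t \<otimes> inv b) \<otimes> b" using e by simp
    thus ?thesis using t by (simp add: m_assoc)
  qed
  have "c = t \<otimes> b" by (simp add: c_def t_def m_assoc)
  thus ?thesis using e2 t by (simp add: m_assoc)
qed

lemma ba: "b \<otimes> a = a \<otimes> (b \<otimes> (c \<otimes> c))"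
proof -
  have "c \<otimes> c = inv c" using sq_inv by simp
  moreover have "a \<otimes> (b \<otimes> inv c) = b \<otimes> a"
    by (simp add: c_def m_assoc inv_mult_group)
  ultimately show ?thesis by simp
qed

lemma c_ne: "c \<noteq> \<one>"
proof
  assume "c = \<one>"
  hence "b \<otimes> a = a \<otimes> b" using ba by (simp add: m_assoc)
  thus False using ab_nc by simp
qed

lemma cpa: "c [^] (m::nat) \<otimes> a [^] (n::nat) = a [^] n \<otimes> c [^] m"
proof -
  have 1: "c [^] m \<otimes> a = a \<otimes> c [^] m" using group_commutes_pow[OF ca] by simp
  show ?thesis using group_commutes_pow[OF 1[symmetric]] by simp
qed
lemma cpb: "c [^] (m::nat) \<otimes> b [^] (n::nat) = b [^] n \<otimes> c [^] m"
proof -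
  have 1: "c [^] m \<otimes> b = b \<otimes> c [^] m" using group_commutes_pow[OF cb] by simp
  show ?thesis using group_commutes_pow[OF 1[symmetric]] by simp
qed
lemma cpa': "x \<in> carrier G \<Longrightarrow> c [^] (m::nat) \<otimes> (a [^] (n::nat) \<otimes> x) = a [^] n \<otimes> (c [^] m \<otimes> x)"
  by (simp add: m_assoc[symmetric] cpa)
lemma cpb': "x \<in> carrier G \<Longrightarrow> c [^] (m::nat) \<otimes> (b [^] (n::nat) \<otimes> x) = b [^] n \<otimes> (c [^] m \<otimes> x)"
  by (simp add: m_assoc[symmetric] cpb)
lemma pm': "x \<in> carrier G \<Longrightarrow> y \<in> carrier G \<Longrightarrow> y [^] (m::nat) \<otimes> (y [^] (n::nat) \<otimes> x) = y [^] (m+n) \<otimes> x"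
  by (simp add: m_assoc[symmetric] nat_pow_mult)

lemma powSuc': "x \<in> carrier G \<Longrightarrow> y \<in> carrier G \<Longrightarrow> x \<otimes> (x [^] (n::nat) \<otimes> y) = x [^] Suc n \<otimes> y"
  by (subst nat_pow_Suc2) (simp_all add: m_assoc)

lemma c2: "c \<otimes> (c \<otimes> c [^] (2*i)) = c [^] (2 * Suc i)"
proof -
  have "c [^] (2::nat) \<otimes> c [^] (2*i) = c [^] (2*Suc i)" by (simp add: nat_pow_mult)
  moreover have "c [^] (2::nat) = c \<otimes> c" by (simp add: numeral_2_eq_2)
  ultimately show ?thesis by (simp add: m_assoc)
qed

lemma b_apow: "b \<otimes> a [^] (i::nat) = a [^] i \<otimes> (b \<otimes> c [^] (2*i))"
proof (induction i)
  case 0 then show ?case by simp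
next
  case (Suc i)
  have "b \<otimes> a [^] Suc i = (b \<otimes> a [^] i) \<otimes> a" by (simp add: m_assoc)
  also have "\<dots> = a [^] i \<otimes> (b \<otimes> (c [^] (2*i) \<otimes> a))" using Suc by (simp add: m_assoc)
  also have "\<dots> = a [^] i \<otimes> (b \<otimes> a \<otimes> c [^] (2*i))"
    using cpa[of "2*i" 1] by (simp add: m_assoc)
  also have "\<dots> = a [^] i \<otimes> (a \<otimes> (b \<otimes> (c \<otimes> (c \<otimes> c [^] (2*i)))))" by (simp add: ba m_assoc)
  also have "\<dots> = a [^] i \<otimes> (a \<otimes> (b \<otimes> c [^] (2 * Suc i)))" by (simp only: c2)
  also have "\<dots> = a [^] Suc i \<otimes> (b \<otimes> c [^] (2 * Suc i))"
    by (simp add: m_assoc)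
  finally show ?case .
qed

lemma bpow_apow: "b [^] (j::nat) \<otimes> a [^] (i::nat) = a [^] i \<otimes> (b [^] j \<otimes> c [^] (2*i*j))"
proof (induction j)
  case 0 then show ?case by simp
next
  case (Suc j)
  have "b [^] Suc j \<otimes> a [^] i = b \<otimes> (b [^] j \<otimes> a [^] i)" by (subst nat_pow_Suc2) (simp_all add: m_assoc)
  also have "\<dots> = (b \<otimes> a [^] i) \<otimes> (b [^] j \<otimes> c [^] (2*i*j))" using Suc by (simp add: m_assoc)
  also have "\<dots> = a [^] i \<otimes> (b \<otimes> (c [^] (2*i) \<otimes> (b [^] j \<otimes> c [^] (2*i*j))))" by (simp add: b_apow m_assoc)
  also have "\<dots> = a [^] i \<otimes> (b \<otimes> (b [^] j \<otimes> (c [^] (2*i) \<otimes> c [^] (2*i*j))))"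
    by (simp add: cpb' m_assoc)
  also have "\<dots> = a [^] i \<otimes> (b [^] Suc j \<otimes> (c [^] (2*i) \<otimes> c [^] (2*i*j)))"
    by (simp only: powSuc' b_in c_in m_closed nat_pow_closed)
  also have "\<dots> = a [^] i \<otimes> (b [^] Suc j \<otimes> c [^] (2*i*Suc j))"
    by (simp only: nat_pow_mult c_in) (simp add: algebra_simps)
  finally show ?case .
qed

lemma bpow_apow': "x \<in> carrier G \<Longrightarrow> b [^] (j::nat) \<otimes> (a [^] (i::nat) \<otimes> x) = a [^] i \<otimes> (b [^] j \<otimes> (c [^] (2*i*j) \<otimes> x))"
  by (simp add: m_assoc[symmetric] bpow_apow)

definition "E i j k = a [^] (i::nat) \<otimes> (b [^] (j::nat) \<otimes> c [^] (k::nat))"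

lemma E_in[simp]: "E i j k \<in> carrier G" by (simp add: E_def)

lemma E_mult: "E i j k \<otimes> E i' j' k' = E (i+i') (j+j') (k+k'+2*i'*j)"
  by (simp add: E_def m_assoc cpa' cpb' bpow_apow' pm' nat_pow_mult algebra_simps)

lemma pow_mod3: "x \<in> carrier G \<Longrightarrow> x [^] (n::nat) = x [^] (n mod 3)"
proof -
  assume x: "x \<in> carrier G"
  have "x [^] n = x [^] (3 * (n div 3) + n mod 3)" by simp
  also have "\<dots> = (x [^] (3::nat)) [^] (n div 3) \<otimes> x [^] (n mod 3)"
    using x nat_pow_mult[of x "3 * (n div 3)" "n mod 3"] nat_pow_pow[of x 3 "n div 3"] by simp
  also have "\<dots> = x [^] (n mod 3)" using x exp3 by simp
  finally show ?thesis .
qed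

lemma E_mod: "E i j k = E (i mod 3) (j mod 3) (k mod 3)"
proof -
  have "a [^] i = a [^] (i mod 3)" "b [^] j = b [^] (j mod 3)" "c [^] k = c [^] (k mod 3)"
    by (rule pow_mod3, simp)+
  thus ?thesis unfolding E_def by simp
qed

lemma c_pow_one: assumes "c [^] (n::nat) = \<one>" shows "n mod 3 = 0"
proof (rule ccontr)
  assume n: "n mod 3 \<noteq> 0"
  have e: "c [^] (n mod 3) = \<one>" using assms pow_mod3[of c n] by simp
  have "n mod 3 = 1 \<or> n mod 3 = 2" using n by linarith
  moreover {
    assume "n mod 3 = 1" hence "c = \<one>" using e by simp }
  moreover {
    assume "n mod 3 = 2" hence "c \<otimes> c = \<one>" using e by (simp add: numeral_2_eq_2)
    hence "inv c = \<one>" using sq_inv by simp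
    hence "c = \<one>" by (metis c_in inv_inv inv_one) }
  ultimately show False using c_ne by blast
qed

lemma E00: "E 0 0 k = c [^] k" by (simp add: E_def)
lemma Ea: "E 1 0 0 = a" by (simp add: E_def)
lemma Eb: "E 0 1 0 = b" by (simp add: E_def)
lemma E_one: "E 0 0 0 = \<one>" by (simp add: E_def)

lemma E_c: "E i j k \<otimes> E 0 0 m = E i j (k+m)" by (simp add: E_mult)

lemma E_one_inv: assumes e: "E i j k = \<one>" shows "i mod 3 = 0 \<and> j mod 3 = 0 \<and> k mod 3 = 0"
proof -
  have "E i j k \<otimes> E 1 0 0 = E 1 0 0 \<otimes> E i j k" using e by simp
  moreover have "E i j k \<otimes> E 1 0 0 = E (i+1) j (k+2*j)" by (simp add: E_mult)
  moreover have "E 1 0 0 \<otimes> E i j k = E (i+1) j k" by (simp add: E_mult)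
  ultimately have "E (i+1) j (k+2*j) = E (i+1) j k" by simp
  hence "E (i+1) j k \<otimes> E 0 0 (2*j) = E (i+1) j k \<otimes> \<one>" by (simp add: E_c)
  hence "c [^] (2*j) = \<one>" using l_cancel_one'[of "E _ _ _"] by (simp add: E00)
  hence "(2*j) mod 3 = 0" by (rule c_pow_one)
  hence j: "j mod 3 = 0" by presburger
  have "E 0 1 0 \<otimes> E i j k = E i j k \<otimes> E 0 1 0" using e by simp
  moreover have "E 0 1 0 \<otimes> E i j k = E i (j+1) (k+2*i)" by (simp add: E_mult)
  moreover have "E i j k \<otimes> E 0 1 0 = E i (j+1) k" by (simp add: E_mult)
  ultimately have "E i (j+1) (k+2*i) = E i (j+1) k" by simp
  hence "E i (j+1) k \<otimes> E 0 0 (2*i) = E i (j+1) k \<otimes> \<one>" by (simp add: E_c)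
  hence "c [^] (2*i) = \<one>" using l_cancel_one'[of "E _ _ _"] by (simp add: E00)
  hence "(2*i) mod 3 = 0" by (rule c_pow_one)
  hence i: "i mod 3 = 0" by presburger
  have "E 0 0 k = \<one>" using e E_mod[of i j k] E_mod[of 0 0 k] i j by simp
  hence "k mod 3 = 0" using c_pow_one E00 by simp
  with i j show ?thesis by simp
qed

lemma m3b: "((s::nat) + 2*P) mod 3 = (s + 2*Q) mod 3 \<longleftrightarrow> P mod 3 = Q mod 3"
proof -
  have r: "\<And>x::nat. x mod 3 = 0 \<or> x mod 3 = 1 \<or> x mod 3 = 2" by arith
  show ?thesis unfolding m3[of s P] m3[of s Q] using r[of s] r[of P] r[of Q] by (elim disjE; simp)
qed

lemma par_cases: assumes "i<3" "j<3" "i'<3" "j'<3" "\<not>(i=0\<and>j=0)" "\<not>(i'=0\<and>j'=0)"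
  "((i'::nat)*j) mod 3 = (i*j') mod 3"
  shows "(i'=i \<and> j'=j) \<or> (i' = (2*i) mod 3 \<and> j' = (2*j) mod 3)"
proof -
  have l: "\<And>x::nat. x < 3 \<Longrightarrow> x = 0 \<or> x = 1 \<or> x = 2" by arith
  show ?thesis using assms l[OF assms(1)] l[OF assms(2)] l[OF assms(3)] l[OF assms(4)] by (elim disjE; simp)
qed

lemma lt3: "x < (3::nat) \<Longrightarrow> x = 0 \<or> x = 1 \<or> x = 2" by arith

lemma E_inj: assumes e: "E i j k = E i' j' k'"
  and lt: "i < 3" "j < 3" "k < 3" "i' < 3" "j' < 3" "k' < 3"
  shows "i = i' \<and> j = j' \<and> k = k'"
proof -
  define F where "F = E (2*i') (2*j') (2*k'+2*i'*j')"
  have "E i' j' k' \<otimes> F = E (3*i') (3*j') (3*(k'+2*i'*j'))" by (simp add: F_def E_mult algebra_simps)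
  also have "\<dots> = \<one>" by (subst E_mod) (simp add: E_one)
  finally have "E i j k \<otimes> F = \<one>" using e by simp
  hence "E (i+2*i') (j+2*j') (k+(2*k'+2*i'*j')+2*(2*i')*j) = \<one>" by (simp add: F_def E_mult)
  hence m: "(i+2*i') mod 3 = 0" "(j+2*j') mod 3 = 0" "(k+(2*k'+2*i'*j')+2*(2*i')*j) mod 3 = 0"
    using E_one_inv by blast+
  have i: "i = i'" using m(1) lt3[OF lt(1)] lt3[OF lt(4)] by (elim disjE; simp)
  have j: "j = j'" using m(2) lt3[OF lt(2)] lt3[OF lt(5)] by (elim disjE; simp)
  have "k = k'" using m(3) j lt3[OF lt(3)] lt3[OF lt(6)] lt3[OF lt(4)] lt3[OF lt(5)] by (elim disjE; simp)
  with i j show ?thesis by simp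
qed

definition "D3 = {..<3::nat} \<times> {..<3::nat} \<times> {..<3::nat}"
definition "Ef = (\<lambda>(i,j,k). E i j k)"

lemma fin: "finite (carrier G)" by (metis card.infinite card27 zero_neq_numeral)

lemma inj_Ef: "inj_on Ef D3"
proof (rule inj_onI)
  fix x y assume x: "x \<in> D3" and y: "y \<in> D3" and e: "Ef x = Ef y"
  obtain i j k where xx: "x = (i,j,k)" by (cases x) auto
  obtain i' j' k' where yy: "y = (i',j',k')" by (cases y) auto
  have "E i j k = E i' j' k'" using e xx yy by (simp add: Ef_def)
  moreover have "i < 3" "j < 3" "k < 3" "i' < 3" "j' < 3" "k' < 3" using x y xx yy by (auto simp: D3_def)
  ultimately show "x = y" using xx yy E_inj by simp
qed

lemma surj_Ef: "Ef ` D3 = carrier G"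
proof (rule card_subset_eq[OF fin])
  show "Ef ` D3 \<subseteq> carrier G" by (auto simp: Ef_def)
  have "card D3 = 27" by (simp add: D3_def card_cartesian_product)
  thus "card (Ef ` D3) = card (carrier G)" using card_image[OF inj_Ef] card27 by simp
qed

definition "crd g = (THE t. t \<in> D3 \<and> g = Ef t)"

lemma crd: assumes "g \<in> carrier G" shows "crd g \<in> D3 \<and> g = Ef (crd g)"
proof -
  have "\<exists>!t. t \<in> D3 \<and> g = Ef t" using assms surj_Ef inj_Ef unfolding inj_on_def by blast
  thus ?thesis unfolding crd_def by (rule theI')
qed

lemma crd_E: "crd (E i j k) = (i mod 3, j mod 3, k mod 3)"
  unfolding crd_def
proof (rule the_equality)
  show "(i mod 3, j mod 3, k mod 3) \<in> D3 \<and> E i j k = Ef (i mod 3, j mod 3, k mod 3)"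
    by (simp add: D3_def Ef_def E_mod[of i j k])
  fix t assume "t \<in> D3 \<and> E i j k = Ef t"
  hence "t \<in> D3" "Ef (i mod 3, j mod 3, k mod 3) = Ef t" by (simp_all add: Ef_def E_mod[of i j k])
  moreover have "(i mod 3, j mod 3, k mod 3) \<in> D3" by (simp add: D3_def)
  ultimately show "t = (i mod 3, j mod 3, k mod 3)" using inj_Ef unfolding inj_on_def by metis
qed

definition "ci g = fst (crd g)"
definition "cj g = fst (snd (crd g))"
definition "ck g = snd (snd (crd g))"

lemma E_crd: "g \<in> carrier G \<Longrightarrow> E (ci g) (cj g) (ck g) = g"
  using crd[of g] unfolding ci_def cj_def ck_def Ef_def by (cases "crd g") auto

lemma crd_lt: assumes "g \<in> carrier G" shows "ci g < 3" "cj g < 3" "ck g < 3"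
  using crd[OF assms] unfolding ci_def cj_def ck_def D3_def by auto

lemma cE: "ci (E i j k) = i mod 3" "cj (E i j k) = j mod 3" "ck (E i j k) = k mod 3"
  by (simp_all add: ci_def cj_def ck_def crd_E)

lemma cmul: assumes g: "g \<in> carrier G" and h: "h \<in> carrier G"
  shows "ci (g \<otimes> h) = (ci g + ci h) mod 3" "cj (g \<otimes> h) = (cj g + cj h) mod 3"
    "ck (g \<otimes> h) = (ck g + ck h + 2*(ci h*cj g)) mod 3"
proof -
  have "g \<otimes> h = E (ci g) (cj g) (ck g) \<otimes> E (ci h) (cj h) (ck h)" using E_crd g h by simp
  also have "\<dots> = E (ci g + ci h) (cj g + cj h) (ck g + ck h + 2*(ci h*cj g))" by (simp add: E_mult mult.assoc)
  finally have e: "g \<otimes> h = E (ci g + ci h) (cj g + cj h) (ck g + ck h + 2*(ci h*cj g))" .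
  show "ci (g \<otimes> h) = (ci g + ci h) mod 3" "cj (g \<otimes> h) = (cj g + cj h) mod 3"
    "ck (g \<otimes> h) = (ck g + ck h + 2*(ci h*cj g)) mod 3" by (simp_all add: e cE)
qed

lemma ceq: "g \<in> carrier G \<Longrightarrow> h \<in> carrier G \<Longrightarrow> g = h \<longleftrightarrow> (ci g = ci h \<and> cj g = cj h \<and> ck g = ck h)"
  by (metis E_crd)

lemma mod3_id: "x < 3 \<Longrightarrow> x mod (3::nat) = x" by simp

lemma commute_iff: assumes g: "g \<in> carrier G" and h: "h \<in> carrier G"
  shows "g \<otimes> h = h \<otimes> g \<longleftrightarrow> (ci h * cj g) mod 3 = (ci g * cj h) mod 3"
proof -
  have "g \<otimes> h = h \<otimes> g \<longleftrightarrow> (ck g + ck h + 2*(ci h*cj g)) mod 3 = (ck g + ck h + 2*(ci g*cj h)) mod 3"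
    using ceq[of "g \<otimes> h" "h \<otimes> g"] cmul[OF g h] cmul[OF h g] g h by (simp add: add.commute add.left_commute)
  thus ?thesis using m3b by simp
qed

lemma cA: "ci a = 1" "cj a = 0" "ck a = 0" using cE[of 1 0 0] Ea by simp_all
lemma cB: "ci b = 0" "cj b = 1" "ck b = 0" using cE[of 0 1 0] Eb by simp_all

lemma center_iff: "g \<in> center G \<longleftrightarrow> g \<in> carrier G \<and> ci g = 0 \<and> cj g = 0"
proof
  assume z: "g \<in> center G"
  hence g: "g \<in> carrier G" and ga: "g \<otimes> a = a \<otimes> g" and gb: "g \<otimes> b = b \<otimes> g" by (auto simp: center_def)
  have "cj g mod 3 = 0" using ga commute_iff[OF g a_in] cA by simp
  moreover have "ci g mod 3 = 0" using gb commute_iff[OF g b_in] cB by simp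
  ultimately show "g \<in> carrier G \<and> ci g = 0 \<and> cj g = 0" using g crd_lt[OF g] by simp
next
  assume "g \<in> carrier G \<and> ci g = 0 \<and> cj g = 0"
  thus "g \<in> center G" using commute_iff by (auto simp: center_def)
qed

lemma crd3: assumes "g \<in> carrier G"
  shows "ci g = 0 \<or> ci g = 1 \<or> ci g = 2" "cj g = 0 \<or> cj g = 1 \<or> cj g = 2" "ck g = 0 \<or> ck g = 1 \<or> ck g = 2"
  using crd_lt[OF assms] by arith+

lemma pow2: "g \<in> carrier G \<Longrightarrow> g [^] (2::nat) = g \<otimes> g" by (simp add: numeral_2_eq_2)

lemma cent_aux: assumes y: "y \<in> carrier G" and u: "u \<in> carrier G" and x: "y \<otimes> u = x"
  and e: "ci x = ci y" "cj x = cj y" shows "u \<in> center G"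
proof -
  have "ci x = (ci y + ci u) mod 3" "cj x = (cj y + cj u) mod 3" using cmul[OF y u] x by simp_all
  hence "ci u = 0" using e crd3(1)[OF y] crd3(1)[OF u] by (elim disjE; simp)
  have "cj u = 0" using \<open>cj x = (cj y + cj u) mod 3\<close> e crd3(2)[OF y] crd3(2)[OF u] by (elim disjE; simp)
  note this \<open>ci u = 0\<close>
  thus ?thesis using u center_iff by simp
qed

lemma zclass_mem: assumes g: "g \<in> carrier G"
  shows "x \<in> zclass G g \<longleftrightarrow> x \<in> carrier G \<and> ((ci x = ci g \<and> cj x = cj g) \<or>
     (ci x = (2*ci g) mod 3 \<and> cj x = (2*cj g) mod 3))"
proof
  assume "x \<in> zclass G g"
  then obtain l u where x: "x = g [^] l \<otimes> u" and l: "l \<in> {1,2::nat}" and u: "u \<in> center G"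
    unfolding zclass_def by blast
  have uc: "u \<in> carrier G" "ci u = 0" "cj u = 0" using u center_iff by auto
  show "x \<in> carrier G \<and> ((ci x = ci g \<and> cj x = cj g) \<or>
     (ci x = (2*ci g) mod 3 \<and> cj x = (2*cj g) mod 3))"
  proof (cases "l = 1")
    case True
    hence "x = g \<otimes> u" using x g by simp
    thus ?thesis using cmul[OF g uc(1)] uc g crd_lt[OF g] by simp
  next
    case False
    hence "x = g \<otimes> g \<otimes> u" using x g l pow2 by auto
    thus ?thesis using cmul[OF g uc(1)] cmul[of "g \<otimes> g" u] cmul[OF g g] uc g crd_lt[OF g]
      by (simp add: mult_2)
  qed
next
  assume h: "x \<in> carrier G \<and> ((ci x = ci g \<and> cj x = cj g) \<or>
     (ci x = (2*ci g) mod 3 \<and> cj x = (2*cj g) mod 3))"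
  hence xc: "x \<in> carrier G" by simp
  show "x \<in> zclass G g"
  proof (cases "ci x = ci g \<and> cj x = cj g")
    case True
    define u where "u = inv g \<otimes> x"
    have "g \<otimes> u = x" "u \<in> carrier G" using g xc by (simp_all add: u_def)
    hence "u \<in> center G" using cent_aux[OF g] True by simp
    moreover have "x = g [^] (1::nat) \<otimes> u" using \<open>g \<otimes> u = x\<close> g by simp
    ultimately show ?thesis unfolding zclass_def by blast
  next
    case False
    hence e: "ci x = (2*ci g) mod 3" "cj x = (2*cj g) mod 3" using h by auto
    define u where "u = inv (g \<otimes> g) \<otimes> x"
    have gg: "g \<otimes> g \<in> carrier G" using g by simp
    have "g \<otimes> g \<otimes> u = x" "u \<in> carrier G" using g xc by (simp_all add: u_def)
    moreover have "ci x = ci (g \<otimes> g)" "cj x = cj (g \<otimes> g)" using e cmul[OF g g] by (simp_all add: mult_2)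
    ultimately have "u \<in> center G" using cent_aux[OF gg] by simp
    moreover have "x = g [^] (2::nat) \<otimes> u" using \<open>g \<otimes> g \<otimes> u = x\<close> g pow2 by simp
    ultimately show ?thesis unfolding zclass_def by blast
  qed
qed

lemma nc_iff: "g \<in> carrier G \<Longrightarrow> g \<notin> center G \<longleftrightarrow> \<not>(ci g = 0 \<and> cj g = 0)"
  using center_iff by simp

lemma zc_eq: assumes g: "g \<in> carrier G" and h: "h \<in> carrier G" and gn: "g \<notin> center G" and hn: "h \<notin> center G"
  shows "zclass G g = zclass G h \<longleftrightarrow> g \<otimes> h = h \<otimes> g"
proof
  assume e: "zclass G g = zclass G h"
  have "h \<in> zclass G h" using zclass_mem[OF h] h by simp
  hence "h \<in> zclass G g" using e by simp
  hence "(ci h = ci g \<and> cj h = cj g) \<or> (ci h = (2*ci g) mod 3 \<and> cj h = (2*cj g) mod 3)"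
    using zclass_mem[OF g] by simp
  hence "(ci h * cj g) mod 3 = (ci g * cj h) mod 3"
    using crd3(1,2)[OF g] by (elim disjE; simp)
  thus "g \<otimes> h = h \<otimes> g" using commute_iff[OF g h] by simp
next
  assume "g \<otimes> h = h \<otimes> g"
  hence "(ci h * cj g) mod 3 = (ci g * cj h) mod 3" using commute_iff[OF g h] by simp
  hence pc: "(ci h = ci g \<and> cj h = cj g) \<or> (ci h = (2*ci g) mod 3 \<and> cj h = (2*cj g) mod 3)"
    using par_cases crd_lt[OF g] crd_lt[OF h] nc_iff[OF g] nc_iff[OF h] gn hn by blast
  have d: "(2 * ((2 * x) mod 3)) mod 3 = x" if "x < 3" for x :: nat
    using lt3[OF that] by (elim disjE; simp)
  have "x \<in> zclass G g \<longleftrightarrow> x \<in> zclass G h" for x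
    unfolding zclass_mem[OF g] zclass_mem[OF h] using pc d crd_lt[OF g] by auto
  thus "zclass G g = zclass G h" by blast
qed

lemma one_c: "ci \<one> = 0" "cj \<one> = 0" using cE[of 0 0 0] E_one by simp_all

lemma lp_c: "set xs \<subseteq> carrier G \<Longrightarrow> list_prod G xs \<in> carrier G \<and>
   ci (list_prod G xs) = sum_list (map ci xs) mod 3 \<and> cj (list_prod G xs) = sum_list (map cj xs) mod 3"
proof (induction xs)
  case Nil
  then show ?case by (simp add: list_prod_def one_c)
next
  case (Cons x xs)
  have e: "list_prod G (x # xs) = x \<otimes> list_prod G xs" by (simp add: list_prod_def)
  have x: "x \<in> carrier G" using Cons by simp
  from Cons have ih: "list_prod G xs \<in> carrier G \<and>
   ci (list_prod G xs) = sum_list (map ci xs) mod 3 \<and> cj (list_prod G xs) = sum_list (map cj xs) mod 3" by simp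
  show ?case unfolding e using cmul[OF x] ih x by (simp add: mod_add_right_eq)
qed

lemma s3sum: assumes "short3 G U"
  shows "3 dvd sum_mset (image_mset ci U) \<and> 3 dvd sum_mset (image_mset cj U)"
proof -
  obtain x1 x2 x3 where U: "U = {#x1, x2, x3#}" and z: "x1 \<otimes> x2 \<otimes> x3 \<in> center G"
    and c: "x1 \<in> carrier G" "x2 \<in> carrier G" "x3 \<in> carrier G"
    using assms unfolding short3_def is_seq_def by auto
  have "ci (x1 \<otimes> x2 \<otimes> x3) = 0" "cj (x1 \<otimes> x2 \<otimes> x3) = 0" using z center_iff by auto
  hence "((ci x1 + ci x2) mod 3 + ci x3) mod 3 = 0" "((cj x1 + cj x2) mod 3 + cj x3) mod 3 = 0"
    using cmul[OF c(1) c(2)] cmul[of "x1 \<otimes> x2" x3] c by simp_all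
  hence "(ci x1 + ci x2 + ci x3) mod 3 = 0" "(cj x1 + cj x2 + cj x3) mod 3 = 0" by (simp_all add: mod_add_left_eq)
  thus ?thesis unfolding U by (simp add: add.assoc dvd_eq_mod_eq_0 add.left_commute add.commute)
qed

lemma cprod: assumes "is_seq G T" "3 dvd sum_mset (image_mset ci T)" "3 dvd sum_mset (image_mset cj T)"
  shows "central_product G T"
  unfolding central_product_def
proof (intro allI impI)
  fix xs assume m: "mset xs = T"
  hence s: "set xs \<subseteq> carrier G" using assms(1) unfolding is_seq_def by auto
  have "sum_list (map ci xs) = sum_mset (image_mset ci T)" "sum_list (map cj xs) = sum_mset (image_mset cj T)"
    using m by (metis mset_map sum_mset_sum_list)+
  thus "list_prod G xs \<in> center G" using lp_c[OF s] assms center_iff by (simp add: dvd_eq_mod_eq_0)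
qed

lemma cp2: assumes "short3 G U1" "short3 G U2" shows "is_seq G (U1+U2) \<and> central_product G (U1+U2)"
proof -
  have "is_seq G (U1+U2)" using assms unfolding short3_def is_seq_def by auto
  moreover have "central_product G (U1+U2)"
    using cprod[OF calculation] s3sum[OF assms(1)] s3sum[OF assms(2)] by simp
  ultimately show ?thesis by simp
qed

lemma nc_prod: assumes g: "g \<in> carrier G" and h: "h \<in> carrier G" and n: "g \<otimes> h \<noteq> h \<otimes> g"
  shows "g \<otimes> h \<notin> center G"
proof
  assume "g \<otimes> h \<in> center G"
  hence "g \<otimes> h \<otimes> g = g \<otimes> (g \<otimes> h)" using g unfolding center_def by auto
  hence "g \<otimes> (h \<otimes> g) = g \<otimes> (g \<otimes> h)" using g h by (simp add: m_assoc)
  hence "h \<otimes> g = g \<otimes> h" using g h by simp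
  thus False using n by simp
qed

lemma msub3: "x \<in># T \<Longrightarrow> y \<in># T \<Longrightarrow> z \<in># T \<Longrightarrow> x \<noteq> y \<Longrightarrow> x \<noteq> z \<Longrightarrow> y \<noteq> z \<Longrightarrow> {#x,y,z#} \<subseteq># T"
  unfolding subseteq_mset_def by (auto simp: count_greater_zero_iff[symmetric] simp del: count_greater_zero_iff)

lemma egz_intro: assumes "is_seq G T" "central_product G T" "{#h1,h2,h3#} \<subseteq># T"
  "h3 \<otimes> h1 \<noteq> h1 \<otimes> h3" "h3 \<otimes> h2 \<noteq> h2 \<otimes> h3" "h3 \<otimes> (h1 \<otimes> h2) \<noteq> (h1 \<otimes> h2) \<otimes> h3"
  shows "EGZ G T"
  unfolding EGZ_def commute_def using assms by blast

end

context H27 begin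

lemma card3: "card {p, q, r::'c} \<le> 3" by (auto simp: card_insert_if)

lemma partA: assumes s1: "short3 G U1" and s2: "short3 G U2"
  and k: "card (nc_zclasses G (U1 + U2)) = 4"
  shows "EGZ G (U1 + U2)"
proof -
  define T where "T = U1 + U2"
  define N where "N = {x \<in> set_mset T. x \<notin> center G}"
  define K where "K = zclass G ` N"
  have cp: "is_seq G T \<and> central_product G T" using cp2[OF s1 s2] T_def by simp
  have Tc: "set_mset T \<subseteq> carrier G" using cp unfolding is_seq_def by simp
  have cK: "card K = 4" using k unfolding K_def N_def T_def nc_zclasses_def by simp
  have fK: "finite K" using cK by (metis card.infinite zero_neq_numeral)
  have "K \<noteq> {}" using cK by auto
  then obtain x where xN: "x \<in> N" unfolding K_def by auto
  have "card (K - {zclass G x}) = 3" using cK xN fK unfolding K_def by (simp add: card_Diff_singleton)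
  hence "K - {zclass G x} \<noteq> {}" by (metis card.empty zero_neq_numeral)
  then obtain y where yN: "y \<in> N" and xy: "zclass G y \<noteq> zclass G x" unfolding K_def by auto
  have xc: "x \<in> carrier G" "x \<notin> center G" "x \<in># T" using xN Tc N_def by auto
  have yc: "y \<in> carrier G" "y \<notin> center G" "y \<in># T" using yN Tc N_def by auto
  have nxy: "x \<otimes> y \<noteq> y \<otimes> x" using zc_eq[OF xc(1) yc(1) xc(2) yc(2)] xy by auto
  define p where "p = x \<otimes> y"
  have pc: "p \<in> carrier G" "p \<notin> center G" using nc_prod[OF xc(1) yc(1) nxy] xc yc p_def by auto
  have "card K - card {zclass G x, zclass G y, zclass G p} \<le> card (K - {zclass G x, zclass G y, zclass G p})"
    by (rule diff_card_le_card_Diff) simp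
  moreover have "card {zclass G x, zclass G y, zclass G p} \<le> 3" by (rule card3)
  ultimately have "card (K - {zclass G x, zclass G y, zclass G p}) \<ge> 1" using cK by linarith
  hence "K - {zclass G x, zclass G y, zclass G p} \<noteq> {}" by (metis card.empty not_one_le_zero)
  then obtain h where hN: "h \<in> N" and hz: "zclass G h \<noteq> zclass G x" "zclass G h \<noteq> zclass G y" "zclass G h \<noteq> zclass G p"
    unfolding K_def by auto
  have hc: "h \<in> carrier G" "h \<notin> center G" "h \<in># T" using hN Tc N_def by auto
  have n1: "h \<otimes> x \<noteq> x \<otimes> h" using zc_eq[OF hc(1) xc(1) hc(2) xc(2)] hz by auto
  have n2: "h \<otimes> y \<noteq> y \<otimes> h" using zc_eq[OF hc(1) yc(1) hc(2) yc(2)] hz by auto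
  have n3: "h \<otimes> p \<noteq> p \<otimes> h" using zc_eq[OF hc(1) pc(1) hc(2) pc(2)] hz by auto
  have "{#x, y, h#} \<subseteq># T" using msub3[OF xc(3) yc(3) hc(3)] xy hz by auto
  thus ?thesis using egz_intro[of T x y h] cp n1 n2 n3 p_def T_def by simp
qed


lemma msY: assumes "y \<in># U2" shows "{#p, q, y#} \<subseteq># {#p, q, r#} + U2"
proof -
  have "{#y#} \<subseteq># U2" using assms by simp
  hence "{#p,q#} + {#y#} \<subseteq># {#p,q#} + U2" by (rule subset_mset.add_left_mono)
  also have "{#p,q#} + U2 \<subseteq># {#p,q,r#} + U2" by simp
  finally show ?thesis by simp
qed

lemma partB: assumes s1: "short3 G U1" and s2: "short3 G U2" and nct: "\<not> central_type G U2"
  and th: "thick_type G U1" and k: "card (nc_zclasses G (U1 + U2)) \<ge> 2"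
  shows "EGZ G (U1 + U2)"
proof -
  define T where "T = U1 + U2"
  define N where "N = {x \<in> set_mset T. x \<notin> center G}"
  define K where "K = zclass G ` N"
  have cp: "is_seq G T \<and> central_product G T" using cp2[OF s1 s2] T_def by simp
  have Tc: "set_mset T \<subseteq> carrier G" using cp unfolding is_seq_def by simp
  have cK: "card K \<ge> 2" using k unfolding K_def N_def T_def nc_zclasses_def by simp
  have allnc: "\<forall>x \<in># U1. x \<notin> center G" using th unfolding thick_type_def thick_A_def thick_B_def by auto
  obtain x1 x2 x3 where U1: "U1 = {#x1,x2,x3#}" and z: "x1 \<otimes> x2 \<otimes> x3 \<in> center G"
    using s1 unfolding short3_def by auto
  have xc: "x1 \<in> carrier G" "x2 \<in> carrier G" "x3 \<in> carrier G" using s1 U1 unfolding short3_def is_seq_def by auto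
  have xn: "x1 \<notin> center G" "x2 \<notin> center G" "x3 \<notin> center G" using allnc U1 by auto
  obtain y where yU: "y \<in># U2" "y \<notin> center G" using nct s2 unfolding central_type_def by auto
  have yc: "y \<in> carrier G" using s2 yU unfolding short3_def is_seq_def by auto
  show ?thesis
  proof (cases "x1 \<otimes> x2 = x2 \<otimes> x1")
    case True
    have "\<not> K \<subseteq> {zclass G x1}"
    proof
      assume "K \<subseteq> {zclass G x1}"
      hence "card K \<le> 1" using card_mono[of "{zclass G x1}" K] by simp
      thus False using cK by simp
    qed
    then obtain h where hN: "h \<in> N" and hz: "zclass G h \<noteq> zclass G x1" unfolding K_def by auto
    have hc: "h \<in> carrier G" "h \<notin> center G" "h \<in># T" using hN Tc N_def by auto
    define p where "p = x1 \<otimes> x2"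
    have pcar: "p \<in> carrier G" using xc p_def by simp
    have pnc: "p \<notin> center G"
    proof
      assume "p \<in> center G"
      hence "ci p = 0" "cj p = 0" using center_iff by auto
      moreover have "ci (p \<otimes> x3) = 0" "cj (p \<otimes> x3) = 0" using z center_iff p_def by auto
      ultimately have "ci x3 = 0" "cj x3 = 0" using cmul[OF pcar xc(3)] crd_lt[OF xc(3)] by simp_all
      thus False using xn(3) center_iff xc(3) by simp
    qed
    have "p \<otimes> x1 = x1 \<otimes> p" using xc by (simp add: p_def m_assoc True[symmetric])
    hence zp: "zclass G h \<noteq> zclass G p" using zc_eq[OF pcar xc(1) pnc xn(1)] hz by simp
    have z2: "zclass G h \<noteq> zclass G x2" using zc_eq[OF xc(2) xc(1) xn(2) xn(1)] True hz by simp
    have n1: "h \<otimes> x1 \<noteq> x1 \<otimes> h" using zc_eq[OF hc(1) xc(1) hc(2) xn(1)] hz by auto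
    have n2: "h \<otimes> x2 \<noteq> x2 \<otimes> h" using zc_eq[OF hc(1) xc(2) hc(2) xn(2)] z2 by auto
    have n3: "h \<otimes> p \<noteq> p \<otimes> h" using zc_eq[OF hc(1) pcar hc(2) pnc] zp by auto
    have "h \<noteq> x1" "h \<noteq> x2" using hz z2 by auto
    have "{#x1, x2, h#} \<subseteq># T"
    proof (cases "h \<in># U2")
      case True
      thus ?thesis unfolding T_def U1 subseteq_mset_def
        by (auto simp: count_greater_zero_iff[symmetric] simp del: count_greater_zero_iff)
    next
      case False
      hence "h = x3" using hc(3) T_def U1 \<open>h \<noteq> x1\<close> \<open>h \<noteq> x2\<close> by auto
      thus ?thesis unfolding T_def U1 by simp
    qed
    thus ?thesis using egz_intro[of T x1 x2 h] cp n1 n2 n3 p_def T_def by simp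
  next
    case False
    have np: "\<not> pr (ci x1) (cj x1) (ci x2) (cj x2)" using False commute_iff[OF xc(1) xc(2)] pr_def by simp
    have "ci (x1 \<otimes> x2 \<otimes> x3) = 0" "cj (x1 \<otimes> x2 \<otimes> x3) = 0" using z center_iff by auto
    hence "((ci x1 + ci x2) mod 3 + ci x3) mod 3 = 0" "((cj x1 + cj x2) mod 3 + cj x3) mod 3 = 0"
      using cmul[OF xc(1) xc(2)] cmul[of "x1 \<otimes> x2" x3] xc by simp_all
    hence a3: "ci x3 = (6 - ci x1 - ci x2) mod 3" "cj x3 = (6 - cj x1 - cj x2) mod 3"
      using neg6[OF crd_lt(1)[OF xc(1)] crd_lt(1)[OF xc(2)] crd_lt(1)[OF xc(3)]]
        neg6[OF crd_lt(2)[OF xc(1)] crd_lt(2)[OF xc(2)] crd_lt(2)[OF xc(3)]] by simp_all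
    have opts: "opt (ci x1) (cj x1) (ci x2) (cj x2) (ci y) (cj y) \<or> opt (ci x1) (cj x1) (ci y) (cj y) (ci x2) (cj x2)
      \<or> opt (ci x2) (cj x2) (ci y) (cj y) (ci x3) (cj x3) \<or> opt (ci x3) (cj x3) (ci y) (cj y) (ci x1) (cj x1)
      \<or> opt (ci y) (cj y) (ci x2) (cj x2) (ci x3) (cj x3) \<or> opt (ci y) (cj y) (ci x3) (cj x3) (ci x1) (cj x1)
      \<or> opt (ci y) (cj y) (ci x1) (cj x1) (ci x2) (cj x2)"
      by (rule vb[OF crd_lt(1,2)[OF xc(1)] crd_lt(1,2)[OF xc(2)] crd_lt(1,2)[OF yc]
          _ _ _ np a3]) (use nc_iff xc yc xn yU in auto)
    have gen: "EGZ G T" if h: "h1 \<in> carrier G" "h2 \<in> carrier G" "h3 \<in> carrier G"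
      and o: "opt (ci h1) (cj h1) (ci h2) (cj h2) (ci h3) (cj h3)" and m: "{#h1,h2,h3#} \<subseteq># T" for h1 h2 h3
    proof -
      have "h3 \<otimes> h1 \<noteq> h1 \<otimes> h3" "h3 \<otimes> h2 \<noteq> h2 \<otimes> h3" "h3 \<otimes> (h1 \<otimes> h2) \<noteq> (h1 \<otimes> h2) \<otimes> h3"
        using o commute_iff[OF h(3) h(1)] commute_iff[OF h(3) h(2)] commute_iff[of h3 "h1 \<otimes> h2"] cmul[OF h(1) h(2)] h
        unfolding opt_def pr_def by auto
      thus ?thesis using egz_intro[OF _ _ m] cp by simp
    qed
    have ms: "{#x1,x2,y#} \<subseteq># T" "{#x1,y,x2#} \<subseteq># T" "{#x2,y,x3#} \<subseteq># T" "{#x3,y,x1#} \<subseteq># T"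
      "{#y,x2,x3#} \<subseteq># T" "{#y,x3,x1#} \<subseteq># T" "{#y,x1,x2#} \<subseteq># T"
      unfolding T_def U1
      using msY[OF yU(1), of x1 x2 x3] msY[OF yU(1), of x2 x3 x1] msY[OF yU(1), of x3 x1 x2]
      by (simp_all add: add_mset_commute)
    from opts show ?thesis
      using gen[OF xc(1) xc(2) yc _ ms(1)] gen[OF xc(1) yc xc(2) _ ms(2)] gen[OF xc(2) yc xc(3) _ ms(3)]
        gen[OF xc(3) yc xc(1) _ ms(4)] gen[OF yc xc(2) xc(3) _ ms(5)] gen[OF yc xc(3) xc(1) _ ms(6)]
        gen[OF yc xc(1) xc(2) _ ms(7)] T_def by blast
  qed
qed



lemma prod4: "E a1 b1 c1 \<otimes> E a2 b2 c2 \<otimes> E a3 b3 c3 \<otimes> E a4 b4 c4 \<otimes> E 0 0 m =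
  E (a1+a2+a3+a4) (b1+b2+b3+b4) (c1+c2+c3+c4+m + 2*(a2*b1 + a3*(b1+b2) + a4*(b1+b2+b3)))"
  by (simp add: E_mult algebra_simps)

lemma E_is_one: "X mod 3 = 0 \<Longrightarrow> Y mod 3 = 0 \<Longrightarrow> Z mod 3 = 0 \<Longrightarrow> E X Y Z = \<one>"
  by (subst E_mod) (simp add: E_one)

lemma partC: fixes g :: "nat \<Rightarrow> 'a" assumes gc: "\<forall>i \<in> {1..4}. g i \<in> carrier G - center G" and u: "u \<in> center G"
  and zd: "zclass G (g 1) \<noteq> zclass G (g 3)"
  and c12: "g 1 \<otimes> g 2 \<in> center G" and c34: "g 3 \<otimes> g 4 \<in> center G"
  shows "\<exists>\<sigma>. \<sigma> permutes {1..4} \<and> g (\<sigma> 1) \<otimes> g (\<sigma> 2) \<otimes> g (\<sigma> 3) \<otimes> g (\<sigma> 4) \<otimes> u = \<one>"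
proof -
  have g: "g 1 \<in> carrier G" "g 2 \<in> carrier G" "g 3 \<in> carrier G" "g 4 \<in> carrier G" using gc by auto
  have gn: "g 1 \<notin> center G" "g 3 \<notin> center G" using gc by auto
  have nc: "g 1 \<otimes> g 3 \<noteq> g 3 \<otimes> g 1" using zc_eq[OF g(1) g(3) gn] zd by simp
  define i1 where "i1 = ci (g 1)" define j1 where "j1 = cj (g 1)" define k1 where "k1 = ck (g 1)"
  define i2 where "i2 = ci (g 2)" define j2 where "j2 = cj (g 2)" define k2 where "k2 = ck (g 2)"
  define i3 where "i3 = ci (g 3)" define j3 where "j3 = cj (g 3)" define k3 where "k3 = ck (g 3)"
  define i4 where "i4 = ci (g 4)" define j4 where "j4 = cj (g 4)" define k4 where "k4 = ck (g 4)"
  define m where "m = ck u"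
  have e: "g 1 = E i1 j1 k1" "g 2 = E i2 j2 k2" "g 3 = E i3 j3 k3" "g 4 = E i4 j4 k4"
    using E_crd g unfolding i1_def j1_def k1_def i2_def j2_def k2_def i3_def j3_def k3_def i4_def j4_def k4_def
    by simp_all
  have uc: "u \<in> carrier G" "ci u = 0" "cj u = 0" using u center_iff by auto
  have eu: "u = E 0 0 m" using E_crd[OF uc(1)] uc unfolding m_def by simp
  have lt: "i1<3" "j1<3" "i2<3" "j2<3" "i3<3" "j3<3" "i4<3" "j4<3"
    using crd_lt g unfolding i1_def j1_def i2_def j2_def i3_def j3_def i4_def j4_def by simp_all
  have np: "(i3*j1) mod 3 \<noteq> (i1*j3) mod 3"
    using nc commute_iff[OF g(1) g(3)] unfolding i1_def j1_def i3_def j3_def by simp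
  have s12: "(i1+i2) mod 3 = 0" "(j1+j2) mod 3 = 0"
    using c12 center_iff cmul[OF g(1) g(2)] unfolding i1_def j1_def i2_def j2_def by auto
  have s34: "(i3+i4) mod 3 = 0" "(j3+j4) mod 3 = 0"
    using c34 center_iff cmul[OF g(3) g(4)] unfolding i3_def j3_def i4_def j4_def by auto
  define K where "K = k1+k2+k3+k4+m"
  have "3 dvd (i1+i2)+(i3+i4)" using dvd_add[of 3 "i1+i2" "i3+i4"] s12 s34 by (simp add: dvd_eq_mod_eq_0)
  moreover have "3 dvd (j1+j2)+(j3+j4)" using dvd_add[of 3 "j1+j2" "j3+j4"] s12 s34 by (simp add: dvd_eq_mod_eq_0)
  ultimately have si: "(i1+i2+i3+i4) mod 3 = 0" "(j1+j2+j3+j4) mod 3 = 0"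
    by (simp_all add: dvd_eq_mod_eq_0[symmetric] add.assoc)
  have si2: "(i1+i3+i2+i4) mod 3 = 0" "(j1+j3+j2+j4) mod 3 = 0" "(i4+i2+i3+i1) mod 3 = 0" "(j4+j2+j3+j1) mod 3 = 0"
    using si by (simp_all add: ac_simps)
  have P1: "transpose 2 3 permutes {1..4::nat}" "transpose 1 4 permutes {1..4::nat}" "id permutes {1..4::nat}"
    by (auto intro: permutes_swap_id permutes_id)
  from arc[OF lt s12 s34 np, of K]
  show ?thesis
  proof (elim disjE)
    assume h: "(K + 2*(i2*j1 + i3*(j1+j2) + i4*(j1+j2+j3))) mod 3 = 0"
    have "g 1 \<otimes> g 2 \<otimes> g 3 \<otimes> g 4 \<otimes> u = \<one>"
      unfolding e eu prod4 using si h by (intro E_is_one) (simp_all add: K_def)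
    thus ?thesis using P1(3) by (intro exI[of _ id]) simp
  next
    assume h: "(K + 2*(i3*j1 + i2*(j1+j3) + i4*(j1+j3+j2))) mod 3 = 0"
    have "g 1 \<otimes> g 3 \<otimes> g 2 \<otimes> g 4 \<otimes> u = \<one>"
      unfolding e eu prod4 using si2 h by (intro E_is_one) (simp_all add: K_def ac_simps)
    thus ?thesis using P1(1) by (intro exI[of _ "transpose 2 3"]) (simp add: transpose_def)
  next
    assume h: "(K + 2*(i2*j4 + i3*(j4+j2) + i1*(j4+j2+j3))) mod 3 = 0"
    have "g 4 \<otimes> g 2 \<otimes> g 3 \<otimes> g 1 \<otimes> u = \<one>"
      unfolding e eu prod4 using si2 h by (intro E_is_one) (simp_all add: K_def ac_simps)
    thus ?thesis using P1(2) by (intro exI[of _ "transpose 1 4"]) (simp add: transpose_def)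
  qed
qed

end

theorem lemma3p4:
  fixes G :: "('a, 'b) monoid_scheme"
  assumes "group G"
    and "card (carrier G) = 27"
    and "\<forall>x \<in> carrier G. x [^]\<^bsub>G\<^esub> (3::nat) = \<one>\<^bsub>G\<^esub>"
    and "\<exists>x \<in> carrier G. \<exists>y \<in> carrier G. x \<otimes>\<^bsub>G\<^esub> y \<noteq> y \<otimes>\<^bsub>G\<^esub> x"
  shows
    "(\<forall>U1 U2. short3 G U1 \<and> short3 G U2 \<and> \<not> central_type G U1 \<and> \<not> central_type G U2 \<and>
        card (nc_zclasses G (U1 + U2)) = 4 \<longrightarrow> EGZ G (U1 + U2))
   \<and> (\<forall>U1 U2. short3 G U1 \<and> short3 G U2 \<and> \<not> central_type G U1 \<and> \<not> central_type G U2 \<and>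
        card (nc_zclasses G (U1 + U2)) \<ge> 2 \<and> (thick_type G U1 \<or> thick_type G U2)
        \<longrightarrow> EGZ G (U1 + U2))
   \<and> (\<forall>g :: nat \<Rightarrow> 'a. \<forall>u.
        (\<forall>i \<in> {1..4}. g i \<in> carrier G - center G) \<and> u \<in> center G \<and>
        zclass G (g 1) \<noteq> zclass G (g 3) \<and>
        g 1 \<otimes>\<^bsub>G\<^esub> g 2 \<in> center G \<and> g 3 \<otimes>\<^bsub>G\<^esub> g 4 \<in> center G
        \<longrightarrow> (\<exists>\<sigma>. \<sigma> permutes {1..4} \<and>
              g (\<sigma> 1) \<otimes>\<^bsub>G\<^esub> g (\<sigma> 2) \<otimes>\<^bsub>G\<^esub> g (\<sigma> 3) \<otimes>\<^bsub>G\<^esub> g (\<sigma> 4) \<otimes>\<^bsub>G\<^esub> u = \<one>\<^bsub>G\<^esub>))"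
proof -
  obtain x y where x: "x \<in> carrier G" and y: "y \<in> carrier G" and xy: "x \<otimes>\<^bsub>G\<^esub> y \<noteq> y \<otimes>\<^bsub>G\<^esub> x"
    using assms(4) by blast
  interpret H: H27 G x y
  proof (rule H27.intro)
    show "exp3grp G" by (intro exp3grp.intro assms(1) exp3grp_axioms.intro assms(3))
    show "H27_axioms G x y" by (intro H27_axioms.intro) (simp_all add: assms x y xy)
  qed
  have A: "\<forall>U1 U2. short3 G U1 \<and> short3 G U2 \<and> \<not> central_type G U1 \<and> \<not> central_type G U2 \<and>
        card (nc_zclasses G (U1 + U2)) = 4 \<longrightarrow> EGZ G (U1 + U2)"
    using H.partA by blast
  have B: "\<forall>U1 U2. short3 G U1 \<and> short3 G U2 \<and> \<not> central_type G U1 \<and> \<not> central_type G U2 \<and>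
        card (nc_zclasses G (U1 + U2)) \<ge> 2 \<and> (thick_type G U1 \<or> thick_type G U2)
        \<longrightarrow> EGZ G (U1 + U2)"
  proof (intro allI impI)
    fix U1 U2 assume h: "short3 G U1 \<and> short3 G U2 \<and> \<not> central_type G U1 \<and> \<not> central_type G U2 \<and>
        card (nc_zclasses G (U1 + U2)) \<ge> 2 \<and> (thick_type G U1 \<or> thick_type G U2)"
    show "EGZ G (U1 + U2)"
    proof (cases "thick_type G U1")
      case True
      thus ?thesis using H.partB h by blast
    next
      case False
      hence "thick_type G U2" using h by blast
      moreover have "card (nc_zclasses G (U2 + U1)) \<ge> 2" using h by (simp add: add.commute)
      ultimately have "EGZ G (U2 + U1)" using H.partB h by blast
      thus ?thesis by (simp add: add.commute)
    qed
  qed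
  have C: "\<forall>g :: nat \<Rightarrow> 'a. \<forall>u.
        (\<forall>i \<in> {1..4}. g i \<in> carrier G - center G) \<and> u \<in> center G \<and>
        zclass G (g 1) \<noteq> zclass G (g 3) \<and>
        g 1 \<otimes>\<^bsub>G\<^esub> g 2 \<in> center G \<and> g 3 \<otimes>\<^bsub>G\<^esub> g 4 \<in> center G
        \<longrightarrow> (\<exists>\<sigma>. \<sigma> permutes {1..4} \<and>
              g (\<sigma> 1) \<otimes>\<^bsub>G\<^esub> g (\<sigma> 2) \<otimes>\<^bsub>G\<^esub> g (\<sigma> 3) \<otimes>\<^bsub>G\<^esub> g (\<sigma> 4) \<otimes>\<^bsub>G\<^esub> u = \<one>\<^bsub>G\<^esub>)"
    using H.partC by blast
  show ?thesis using A B C by blast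
qed

end
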